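(* Let $T$ be a finite tree rooted at a fixed non-leaf vertex $r$ and let $k\geq 1$. Define the graphs $I'$ and $I_0,\ldots,I_{k-1}$ on vertex set $V(T)$ as follows: distinct $u,v$ are adjacent in $I'$ iff $f'(u)\cap f'(v)\neq\emptyset$, where $f'(u)=[d_T(r,u),d_T(r,u)+k]$; and distinct $u,v$ are adjacent in $I_i$ iff $f_i(u)\cap f_i(v)\neq\emptyset$, where $f_i(u)=[s(p^i(u)),\,t(p^{k-1-i}(u))]$. If $u,v$ are distinct vertices with $(u,v)\notin E(T^k)$, then either $(u,v)\notin E(I')$ or there exists $i\in\{0,\ldots,k-1\}$ with $(u,v)\notin E(I_i)$.
   Context: $d_T$ is the distance in $T$, and $T^k$ is the graph on $V(T)$ in which distinct $u,v$ are adjacent iff $d_T(u,v)\leq k$. For vertices $u,v$, $u\preceq v$ ($u$ is an ancestor of $v$) means that $u$ lies on the unique path in $T$ from $r$ to $v$. For $u\neq r$, $p(u)$ is the neighbour of $u$ on the path from $u$ to $r$, and $p(r)=r$; $p^0(u)=u$, $p^i(u)=p(p^{i-1}(u))$ for $i\geq1$. Let $l_1,\ldots,l_m$ be the leaves (degree-1 vertices) of $T$ in the order in which they appear in some depth-first traversal of $T$ starting from $r$; for a vertex $u$, $L(u)=\{i: u\preceq l_i\}$, $s(u)=\min L(u)$, $t(u)=\max L(u)$. *)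

theory Defs
  imports Main
begin

definition is_walk :: "('a \<Rightarrow> 'a \<Rightarrow> bool) \<Rightarrow> 'a list \<Rightarrow> bool" where
  "is_walk E xs \<longleftrightarrow> xs \<noteq> [] \<and> (\<forall>j. Suc j < length xs \<longrightarrow> E (xs ! j) (xs ! Suc j))"

definition is_path :: "('a \<Rightarrow> 'a \<Rightarrow> bool) \<Rightarrow> 'a \<Rightarrow> 'a \<Rightarrow> 'a list \<Rightarrow> bool" where
  "is_path E u v xs \<longleftrightarrow> is_walk E xs \<and> distinct xs \<and> hd xs = u \<and> last xs = v"

definition is_tree :: "'a set \<Rightarrow> ('a \<Rightarrow> 'a \<Rightarrow> bool) \<Rightarrow> bool" where
  "is_tree V E \<longleftrightarrow> finite V \<and> V \<noteq> {}
     \<and> (\<forall>u v. E u v \<longrightarrow> u \<in> V \<and> v \<in> V)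
     \<and> (\<forall>u v. E u v \<longrightarrow> E v u) \<and> (\<forall>u. \<not> E u u)
     \<and> (\<forall>u\<in>V. \<forall>v\<in>V. \<exists>xs. is_path E u v xs)
     \<and> (\<forall>xs. \<not> (is_walk E xs \<and> distinct xs \<and> length xs \<ge> 3 \<and> E (last xs) (hd xs)))"

definition tdist :: "('a \<Rightarrow> 'a \<Rightarrow> bool) \<Rightarrow> 'a \<Rightarrow> 'a \<Rightarrow> nat" where
  "tdist E u v = (LEAST n. \<exists>xs. is_walk E xs \<and> hd xs = u \<and> last xs = v \<and> length xs = Suc n)"

definition anc :: "('a \<Rightarrow> 'a \<Rightarrow> bool) \<Rightarrow> 'a \<Rightarrow> 'a \<Rightarrow> 'a \<Rightarrow> bool" where
  "anc E r u v \<longleftrightarrow> (\<exists>xs. is_path E r v xs \<and> u \<in> set xs)"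

definition par :: "('a \<Rightarrow> 'a \<Rightarrow> bool) \<Rightarrow> 'a \<Rightarrow> 'a \<Rightarrow> 'a" where
  "par E r u = (if u = r then r else (THE w. E u w \<and> (\<exists>xs. is_path E u r xs \<and> w \<in> set xs)))"

definition is_leaf :: "'a set \<Rightarrow> ('a \<Rightarrow> 'a \<Rightarrow> bool) \<Rightarrow> 'a \<Rightarrow> bool" where
  "is_leaf V E u \<longleftrightarrow> card {v \<in> V. E u v} = 1"

definition children :: "'a set \<Rightarrow> ('a \<Rightarrow> 'a \<Rightarrow> bool) \<Rightarrow> 'a \<Rightarrow> 'a \<Rightarrow> 'a set" where
  "children V E r u = {v \<in> V. v \<noteq> r \<and> par E r v = u}"

text \<open>dfs_seq V E r u xs: xs is the sequence of vertices of the subtree rooted at u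
  in the order they are first visited by some depth-first traversal starting at u
  (children may be visited in any order).\<close>
inductive dfs_seq :: "'a set \<Rightarrow> ('a \<Rightarrow> 'a \<Rightarrow> bool) \<Rightarrow> 'a \<Rightarrow> 'a \<Rightarrow> 'a list \<Rightarrow> bool"
  for V E r where
  "distinct cs \<Longrightarrow> set cs = children V E r u \<Longrightarrow> list_all2 (dfs_seq V E r) cs xss
   \<Longrightarrow> dfs_seq V E r u (u # concat xss)"

text \<open>Leaves l_0, ..., l_{m-1} listed in the DFS order xs (0-based indexing).\<close>
definition leaf_list :: "'a set \<Rightarrow> ('a \<Rightarrow> 'a \<Rightarrow> bool) \<Rightarrow> 'a list \<Rightarrow> 'a list" where
  "leaf_list V E xs = filter (is_leaf V E) xs"

definition Lset :: "'a set \<Rightarrow> ('a \<Rightarrow> 'a \<Rightarrow> bool) \<Rightarrow> 'a \<Rightarrow> 'a list \<Rightarrow> 'a \<Rightarrow> nat set" where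
  "Lset V E r xs u = {i. i < length (leaf_list V E xs) \<and> anc E r u (leaf_list V E xs ! i)}"

definition sidx :: "'a set \<Rightarrow> ('a \<Rightarrow> 'a \<Rightarrow> bool) \<Rightarrow> 'a \<Rightarrow> 'a list \<Rightarrow> 'a \<Rightarrow> nat" where
  "sidx V E r xs u = Min (Lset V E r xs u)"

definition tidx :: "'a set \<Rightarrow> ('a \<Rightarrow> 'a \<Rightarrow> bool) \<Rightarrow> 'a \<Rightarrow> 'a list \<Rightarrow> 'a \<Rightarrow> nat" where
  "tidx V E r xs u = Max (Lset V E r xs u)"

definition fprime :: "('a \<Rightarrow> 'a \<Rightarrow> bool) \<Rightarrow> 'a \<Rightarrow> nat \<Rightarrow> 'a \<Rightarrow> nat set" where
  "fprime E r k u = {tdist E r u .. tdist E r u + k}"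

definition fi :: "'a set \<Rightarrow> ('a \<Rightarrow> 'a \<Rightarrow> bool) \<Rightarrow> 'a \<Rightarrow> 'a list \<Rightarrow> nat \<Rightarrow> nat \<Rightarrow> 'a \<Rightarrow> nat set" where
  "fi V E r xs k i u = {sidx V E r xs ((par E r ^^ i) u) .. tidx V E r xs ((par E r ^^ (k - 1 - i)) u)}"

end

theory Submission
  imports Defs
begin



lemma walk_Nil[simp]: "\<not> is_walk E []" by (simp add: is_walk_def)
lemma walk_single[simp]: "is_walk E [x]" by (simp add: is_walk_def)
lemma walk_CC[simp]: "is_walk E (x#y#zs) = (E x y \<and> is_walk E (y#zs))"
  unfolding is_walk_def
  by (auto simp: nth_Cons split: nat.splits)

lemma walk_Cons: "ys \<noteq> [] \<Longrightarrow> is_walk E (x#ys) = (E x (hd ys) \<and> is_walk E ys)"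
  by (cases ys) auto

lemma walk_append: "xs \<noteq> [] \<Longrightarrow> ys \<noteq> [] \<Longrightarrow>
   is_walk E (xs@ys) = (is_walk E xs \<and> is_walk E ys \<and> E (last xs) (hd ys))"
proof (induction xs)
  case Nil then show ?case by simp
next
  case (Cons a xs)
  show ?case
  proof (cases "xs = []")
    case True then show ?thesis using Cons by (auto simp: walk_Cons)
  next
    case False
    then show ?thesis using Cons by (simp add: walk_Cons)
  qed
qed

lemma walk_rev: assumes "\<forall>u v. E u v \<longrightarrow> E v u" shows "is_walk E (rev xs) = is_walk E xs"
proof (induction xs)
  case Nil then show ?case by simp
next
  case (Cons a xs)
  show ?case
  proof (cases "xs = []")
    case True then show ?thesis by simp
  next
    case False
    then show ?thesis using Cons assms walk_append[of "rev xs" "[a]" E]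
      by (auto simp: walk_Cons hd_rev last_rev)
  qed
qed

lemma distinct_hd_last: "distinct xs \<Longrightarrow> xs \<noteq> [] \<Longrightarrow> hd xs = last xs \<Longrightarrow> xs = [hd xs]"
proof (cases xs)
  case (Cons a t)
  assume "distinct xs" "hd xs = last xs"
  then show ?thesis using Cons by (cases t) (auto split: if_splits)
qed simp

locale tr =
  fixes V :: "'a set" and E :: "'a \<Rightarrow> 'a \<Rightarrow> bool" and r :: 'a
  assumes tree: "is_tree V E" and rV: "r \<in> V"
begin

lemma finV: "finite V" using tree by (simp add: is_tree_def)
lemma EV: "E u v \<Longrightarrow> u \<in> V \<and> v \<in> V" using tree by (simp add: is_tree_def)
lemma Esym: "E u v \<Longrightarrow> E v u" using tree by (simp add: is_tree_def)
lemma Esym': "\<forall>u v. E u v \<longrightarrow> E v u" using tree by (simp add: is_tree_def)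
lemma Eirr: "\<not> E u u" using tree by (simp add: is_tree_def)
lemma conn: "u \<in> V \<Longrightarrow> v \<in> V \<Longrightarrow> \<exists>xs. is_path E u v xs" using tree by (simp add: is_tree_def)
lemma acyc: "is_walk E xs \<Longrightarrow> distinct xs \<Longrightarrow> length xs \<ge> 3 \<Longrightarrow> E (last xs) (hd xs) \<Longrightarrow> False"
  using tree by (simp add: is_tree_def)

lemma path_rev: "is_path E u v p \<Longrightarrow> is_path E v u (rev p)"
  using walk_rev[OF Esym'] by (auto simp: is_path_def hd_rev last_rev)


lemma no_chord2:
  assumes "is_walk E (x#rest)" "distinct (x#rest)" "w \<in> set rest" "w \<noteq> hd rest" "E x w"
  shows False
proof -
  obtain r1 r2 where sp: "rest = r1 @ w # r2" using assms(3) by (meson split_list)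
  have "r1 \<noteq> []" using sp assms(4) by auto
  have w: "is_walk E ((x # r1 @ [w]) @ r2)" using assms(1) sp by simp
  have w1: "is_walk E (x # r1 @ [w])"
  proof (cases "r2 = []")
    case True then show ?thesis using w by simp
  next
    case False then show ?thesis using walk_append[of "x # r1 @ [w]" r2 E] w by simp
  qed
  show False
    apply (rule acyc[OF w1])
    using assms(2) sp \<open>r1 \<noteq> []\<close> assms(5) Esym by (auto simp: Suc_le_eq)
qed

lemma path_unique:
  "is_path E u v p \<Longrightarrow> is_path E u v q \<Longrightarrow> p = q"
proof (induction "length p" arbitrary: p q u rule: less_induct)
  case less
  have pne: "p \<noteq> []" and qne: "q \<noteq> []" using less.prems by (auto simp: is_path_def)
  obtain p' where p: "p = u # p'" using less.prems pne by (cases p) (auto simp: is_path_def)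
  obtain q' where q: "q = u # q'" using less.prems qne by (cases q) (auto simp: is_path_def)
  show ?case
  proof (cases "p' = [] \<or> q' = []")
    case True
    then have "u = v" using less.prems p q by (auto simp: is_path_def)
    then show ?thesis using less.prems distinct_hd_last[of p] distinct_hd_last[of q] p q
      by (auto simp: is_path_def)
  next
    case False
    then have pn: "p' \<noteq> []" and qn: "q' \<noteq> []" by auto
    show ?thesis
    proof (cases "hd p' = hd q'")
      case True
      have "is_path E (hd p') v p'" using less.prems p pn by (auto simp: is_path_def walk_Cons)
      moreover have "is_path E (hd p') v q'" using less.prems q qn True by (auto simp: is_path_def walk_Cons)
      ultimately have "p' = q'" using less.hyps[of p'] p by auto
      then show ?thesis using p q by simp
    next
      case hne: False
      have "v \<in> set q'" using less.prems q qn last_in_set[OF qn] by (auto simp: is_path_def)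
      moreover have "v \<in> set p'" using less.prems p pn last_in_set[OF pn] by (auto simp: is_path_def)
      ultimately obtain p1 z p2 where sp: "p' = p1 @ z # p2" "z \<in> set q'" "\<forall>y\<in>set p1. y \<notin> set q'"
        using split_list_first_prop[of p' "\<lambda>y. y \<in> set q'"] by blast
      obtain q1 q2 where sq: "q' = q1 @ z # q2" using sp(2) by (meson split_list)
      define cyc where "cyc = (u # p1 @ [z]) @ rev q1"
      have wp: "is_walk E ((u # p1 @ [z]) @ p2)" using less.prems p sp by (simp add: is_path_def)
      have w1: "is_walk E (u # p1 @ [z])"
        using wp walk_append[of "u # p1 @ [z]" p2 E] by (cases "p2 = []") auto
      have wq: "is_walk E ((q1 @ [z]) @ q2)" using less.prems q sq qn by (simp add: is_path_def walk_Cons)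
      have w2: "is_walk E (q1 @ [z])"
        using wq walk_append[of "q1 @ [z]" q2 E] by (cases "q2 = []") auto
      have w2r: "is_walk E (z # rev q1)" using w2 walk_rev[OF Esym', of "q1 @ [z]"] by simp
      have wc: "is_walk E cyc"
      proof (cases "q1 = []")
        case True then show ?thesis using w1 by (simp add: cyc_def)
      next
        case False
        then show ?thesis using w1 w2r walk_append[of "u # p1 @ [z]" "rev q1" E]
          by (simp add: cyc_def walk_Cons)
      qed
      have dp: "distinct (u # p1 @ z # p2)" using less.prems p sp by (simp add: is_path_def)
      have dq: "distinct (u # q1 @ z # q2)" using less.prems q sq by (simp add: is_path_def)
      have dc: "distinct cyc" using dp dq sp(3) sq by (auto simp: cyc_def)
      have Euq: "E u (hd q')" using less.prems q qn by (simp add: is_path_def walk_Cons)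
      have lc: "E (last cyc) (hd cyc)"
      proof (cases "q1 = []")
        case True then show ?thesis using Euq sq Esym by (simp add: cyc_def)
      next
        case False then show ?thesis using Euq sq Esym by (simp add: cyc_def last_rev)
      qed
      have "length cyc \<ge> 3"
      proof (cases "p1 = [] \<and> q1 = []")
        case True then show ?thesis using hne sp sq by simp
      next
        case False then show ?thesis by (auto simp: cyc_def Suc_le_eq)
      qed
      then show ?thesis using acyc[OF wc dc _ lc] by simp
    qed
  qed
qed

end



lemma walk_appD1: "A \<noteq> [] \<Longrightarrow> is_walk E (A@B) \<Longrightarrow> is_walk E A"
  using walk_append[of A B E] by (cases "B = []") auto
lemma walk_appD2: "B \<noteq> [] \<Longrightarrow> is_walk E (A@B) \<Longrightarrow> is_walk E B"
  using walk_append[of A B E] by (cases "A = []") auto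
lemma walk_join: "is_walk E (A@[y]) \<Longrightarrow> is_walk E (y#C) \<Longrightarrow> is_walk E (A@y#C)"
  using walk_append[of "A@[y]" C E] by (cases "C = []") (auto simp: walk_Cons)

lemma walk_to_path: "is_walk E xs \<Longrightarrow> \<exists>ys. is_path E (hd xs) (last xs) ys \<and> length ys \<le> length xs"
proof (induction "length xs" arbitrary: xs rule: less_induct)
  case less
  show ?case
  proof (cases "distinct xs")
    case True then show ?thesis using less.prems by (auto simp: is_path_def)
  next
    case False
    then obtain a b c y where sp: "xs = a @ [y] @ b @ [y] @ c" using not_distinct_decomp by blast
    have w1: "is_walk E (a@[y])" using walk_appD1[where A="a@[y]" and B="b@[y]@c"] less.prems sp by simp
    have w2: "is_walk E (y#c)" using walk_appD2[where B="y#c" and A="a@[y]@b"] less.prems sp by simp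
    have w: "is_walk E (a@y#c)" using walk_join[OF w1 w2] .
    have "length (a@y#c) < length xs" using sp by simp
    from less.hyps[OF this w] obtain ys where "is_path E (hd (a@y#c)) (last (a@y#c)) ys"
       "length ys \<le> length (a@y#c)" by blast
    moreover have "hd (a@y#c) = hd xs" "last (a@y#c) = last xs" using sp by (cases a; cases c; simp)+
    ultimately show ?thesis using sp by fastforce
  qed
qed

context tr begin

definition tp where "tp x y = (THE p. is_path E x y p)"

lemma tp_eq: "is_path E x y p \<Longrightarrow> tp x y = p"
  unfolding tp_def using path_unique by blast

lemma tp_path: "x \<in> V \<Longrightarrow> y \<in> V \<Longrightarrow> is_path E x y (tp x y)"
  using conn tp_eq by metis

lemma tp_refl: "tp x x = [x]"
  by (rule tp_eq) (simp add: is_path_def)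

lemma tp_ne: "x \<in> V \<Longrightarrow> y \<in> V \<Longrightarrow> tp x y \<noteq> []"
  using tp_path[of x y] by (auto simp: is_path_def)

lemma tp_rev: "x \<in> V \<Longrightarrow> y \<in> V \<Longrightarrow> tp y x = rev (tp x y)"
  using tp_path path_rev tp_eq by metis

lemma tdist_tp: assumes "x \<in> V" "y \<in> V" shows "tdist E x y = length (tp x y) - 1"
  unfolding tdist_def
proof (rule Least_equality)
  show "\<exists>xs. is_walk E xs \<and> hd xs = x \<and> last xs = y \<and> length xs = Suc (length (tp x y) - 1)"
    using tp_path[OF assms] tp_ne[OF assms] by (intro exI[of _ "tp x y"]) (auto simp: is_path_def)
next
  fix m assume "\<exists>xs. is_walk E xs \<and> hd xs = x \<and> last xs = y \<and> length xs = Suc m"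
  then obtain xs where xs: "is_walk E xs" "hd xs = x" "last xs = y" "length xs = Suc m" by blast
  then obtain ys where "is_path E x y ys" "length ys \<le> Suc m" using walk_to_path[OF xs(1)] by metis
  then show "length (tp x y) - 1 \<le> m" using tp_eq by fastforce
qed

lemma tdist_le: assumes "is_walk E ws" "hd ws = x" "last ws = y" "length ws = Suc n"
  shows "tdist E x y \<le> n"
  unfolding tdist_def by (rule Least_le) (use assms in blast)

abbreviation pa where "pa \<equiv> par E r"

lemma parent:
  assumes "x \<in> V" "x \<noteq> r"
  shows "tp x r = x # tp (pa x) r \<and> E x (pa x) \<and> pa x \<in> V"
proof -
  have P: "is_path E x r (tp x r)" using tp_path assms rV by blast
  then obtain rest where tr: "tp x r = x # rest" by (cases "tp x r") (auto simp: is_path_def)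
  have rne: "rest \<noteq> []" using P tr assms by (auto simp: is_path_def)
  define y where "y = hd rest"
  have Exy: "E x y" using P tr rne by (simp add: is_path_def walk_Cons y_def)
  have px: "pa x = (THE w. E x w \<and> (\<exists>xs. is_path E x r xs \<and> w \<in> set xs))"
    using assms(2) by (simp add: par_def)
  have "pa x = y"
    unfolding px
  proof (rule the_equality)
    show "E x y \<and> (\<exists>xs. is_path E x r xs \<and> y \<in> set xs)"
      using Exy P tr rne by (auto simp: y_def)
  next
    fix w assume a: "E x w \<and> (\<exists>xs. is_path E x r xs \<and> w \<in> set xs)"
    then have "w \<in> set (tp x r)" using tp_eq by blast
    then have "w \<in> set rest" using tr a Eirr by auto
    then show "w = y" using no_chord2[of x rest w] a P tr unfolding y_def is_path_def by auto
  qed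
  moreover have "is_path E y r rest" using P tr rne by (auto simp: is_path_def walk_Cons y_def)
  ultimately show ?thesis using tp_eq tr Exy EV by metis
qed

abbreviation dep where "dep x \<equiv> tdist E r x"

lemma dep_len: "x \<in> V \<Longrightarrow> dep x = length (tp x r) - 1"
  using tdist_tp[OF rV] tp_rev[OF rV] by simp

lemma dep_r[simp]: "dep r = 0" using dep_len[OF rV] tp_refl by simp

lemma dep_par: "x \<in> V \<Longrightarrow> x \<noteq> r \<Longrightarrow> dep x = Suc (dep (pa x))"
proof -
  assume a: "x \<in> V" "x \<noteq> r"
  have "dep x = length (tp (pa x) r)" using dep_len[OF a(1)] parent[OF a] by simp
  moreover have "tp (pa x) r \<noteq> []" using tp_ne parent[OF a] rV by blast
  ultimately show ?thesis using dep_len[of "pa x"] parent[OF a] by (cases "tp (pa x) r") auto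
qed

lemma dep0: "x \<in> V \<Longrightarrow> dep x = 0 \<Longrightarrow> x = r"
  using dep_par by fastforce

lemma par_r[simp]: "pa r = r" by (simp add: par_def)

lemma parV: "x \<in> V \<Longrightarrow> pa x \<in> V" using parent rV by (cases "x = r") auto

lemma parnV: "x \<in> V \<Longrightarrow> (pa ^^ n) x \<in> V"
  by (induction n) (auto simp: parV)

lemma parn_r[simp]: "(pa ^^ n) r = r"
  by (induction n) auto

lemma dep_parn: "x \<in> V \<Longrightarrow> dep ((pa ^^ n) x) = dep x - n"
proof (induction n)
  case 0 then show ?case by simp
next
  case (Suc n)
  show ?case
  proof (cases "(pa ^^ n) x = r")
    case True
    then show ?thesis using Suc by simp
  next
    case False
    then show ?thesis using Suc dep_par[OF parnV[OF Suc.prems] False] by simp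
  qed
qed

lemma parn_dep: "x \<in> V \<Longrightarrow> (pa ^^ dep x) x = r"
  using dep_parn dep0 parnV by simp

lemma parn_big: "x \<in> V \<Longrightarrow> dep x \<le> n \<Longrightarrow> (pa ^^ n) x = r"
proof -
  assume a: "x \<in> V" "dep x \<le> n"
  have "(pa ^^ n) x = (pa ^^ (n - dep x)) ((pa ^^ dep x) x)"
    using a(2) funpow_add[of "n - dep x" "dep x" pa] by (simp add: comp_def)
  then show ?thesis using parn_dep[OF a(1)] by simp
qed

lemma parn_ne_r: "x \<in> V \<Longrightarrow> (pa ^^ n) x \<noteq> r \<Longrightarrow> n < dep x"
  using parn_big by (meson not_less)

lemma tp_set: "x \<in> V \<Longrightarrow> set (tp x r) = range (\<lambda>j. (pa ^^ j) x)"
proof (induction "dep x" arbitrary: x)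
  case 0
  then have "x = r" using dep0 by simp
  then show ?case by (auto simp: tp_refl)
next
  case (Suc n)
  then have xr: "x \<noteq> r" by auto
  have "dep (pa x) = n" using dep_par[OF Suc.prems xr] Suc.hyps by simp
  then have IH: "set (tp (pa x) r) = range (\<lambda>j. (pa ^^ j) (pa x))" using Suc parV by blast
  have "set (tp x r) = insert x (range (\<lambda>j. (pa ^^ j) (pa x)))"
    using parent[OF Suc.prems xr] IH by simp
  also have "\<dots> = range (\<lambda>j. (pa ^^ j) x)"
  proof (intro set_eqI iffI)
    have e: "(pa ^^ j) (pa x) = (pa ^^ Suc j) x" for j by (simp add: funpow_swap1)
    fix z
    { assume "z \<in> insert x (range (\<lambda>j. (pa ^^ j) (pa x)))"
      then show "z \<in> range (\<lambda>j. (pa ^^ j) x)"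
      proof
        assume "z = x" then show ?thesis by (metis funpow_0 rangeI)
      next
        assume "z \<in> range (\<lambda>j. (pa ^^ j) (pa x))"
        then obtain j where "z = (pa ^^ j) (pa x)" by blast
        then show ?thesis unfolding e by blast
      qed }
    { assume "z \<in> range (\<lambda>j. (pa ^^ j) x)"
      then obtain j where zj: "z = (pa ^^ j) x" by blast
      show "z \<in> insert x (range (\<lambda>j. (pa ^^ j) (pa x)))"
      proof (cases j)
        case 0 then show ?thesis using zj by simp
      next
        case (Suc i)
        then have "z = (pa ^^ i) (pa x)" using zj e[of i] by simp
        then show ?thesis by blast
      qed }
  qed
  finally show ?case .
qed

lemma anc_iff: "x \<in> V \<Longrightarrow> anc E r y x \<longleftrightarrow> (\<exists>j. (pa ^^ j) x = y)"
proof -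
  assume x: "x \<in> V"
  have "anc E r y x \<longleftrightarrow> y \<in> set (tp r x)"
    unfolding anc_def using tp_eq tp_path[OF rV x] by blast
  also have "\<dots> \<longleftrightarrow> y \<in> set (tp x r)" using tp_rev[OF x rV] by simp
  finally show ?thesis using tp_set[OF x] by auto
qed

end



definition sep :: "'a set \<Rightarrow> 'a set \<Rightarrow> 'a list \<Rightarrow> bool" where
  "sep A B L \<longleftrightarrow> (\<exists>L1 L2. L = L1 @ L2 \<and> set L1 \<inter> B = {} \<and> set L2 \<inter> A = {})"

lemma sep_ext: "sep A B L \<Longrightarrow> set P \<inter> (A \<union> B) = {} \<Longrightarrow> set Q \<inter> (A \<union> B) = {} \<Longrightarrow> sep A B (P @ L @ Q)"
proof -
  assume a: "sep A B L" "set P \<inter> (A \<union> B) = {}" "set Q \<inter> (A \<union> B) = {}"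
  then obtain L1 L2 where s: "L = L1 @ L2" "set L1 \<inter> B = {}" "set L2 \<inter> A = {}" unfolding sep_def by blast
  have "P @ L @ Q = (P @ L1) @ (L2 @ Q)" using s by simp
  moreover have "set (P @ L1) \<inter> B = {}" "set (L2 @ Q) \<inter> A = {}" using s a by auto
  ultimately show ?thesis unfolding sep_def by (intro exI conjI)
qed

lemma sep_filter: "sep A B L \<Longrightarrow> sep A B (filter f L)"
proof -
  assume a: "sep A B L"
  then obtain L1 L2 where s: "L = L1 @ L2" "set L1 \<inter> B = {}" "set L2 \<inter> A = {}" unfolding sep_def by blast
  have "filter f L = filter f L1 @ filter f L2" using s by simp
  moreover have "set (filter f L1) \<inter> B = {}" "set (filter f L2) \<inter> A = {}" using s by auto
  ultimately show ?thesis unfolding sep_def by (intro exI conjI)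
qed

lemma sep_idx: assumes "sep A B L" "i < length L" "j < length L" "L!i \<in> A" "L!j \<in> B" shows "i < j"
proof -
  obtain L1 L2 where s: "L = L1 @ L2" "set L1 \<inter> B = {}" "set L2 \<inter> A = {}" using assms(1) unfolding sep_def by blast
  have "i < length L1"
  proof (rule ccontr)
    assume a: "\<not> i < length L1"
    have e: "L!i = L2 ! (i - length L1)" using s(1) a by (simp add: nth_append)
    have "i - length L1 < length L2" using s(1) assms(2) a by simp
    then have "L2 ! (i - length L1) \<in> set L2" by (rule nth_mem)
    then show False using s(3) assms(4) e by (auto simp: disjoint_iff)
  qed
  moreover have "\<not> j < length L1"
  proof
    assume a: "j < length L1"
    then have "L!j = L1 ! j" using s(1) by (simp add: nth_append)
    moreover have "L1 ! j \<in> set L1" using a by (rule nth_mem)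
    ultimately show False using s(2) assms(5) by (auto simp: disjoint_iff)
  qed
  ultimately show ?thesis by simp
qed

context tr begin

definition sub where "sub x = {y \<in> V. \<exists>j. (pa ^^ j) y = x}"

lemma sub_V: "sub x \<subseteq> V" by (auto simp: sub_def)
lemma sub_self: "x \<in> V \<Longrightarrow> x \<in> sub x"
proof -
  assume "x \<in> V"
  moreover have "(pa ^^ 0) x = x" by simp
  ultimately show ?thesis unfolding sub_def by blast
qed
lemma sub_trans: "y \<in> sub x \<Longrightarrow> x \<in> sub z \<Longrightarrow> y \<in> sub z"
proof -
  assume "y \<in> sub x" "x \<in> sub z"
  then obtain i j where "y \<in> V" "(pa ^^ i) y = x" "(pa ^^ j) x = z" unfolding sub_def by blast
  then have "(pa ^^ (j + i)) y = z" by (simp add: funpow_add)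
  then show ?thesis using \<open>y \<in> V\<close> unfolding sub_def by blast
qed
lemma sub_r: "y \<in> V \<Longrightarrow> y \<in> sub r"
proof -
  assume a: "y \<in> V"
  then have "(pa ^^ dep y) y = r" by (rule parn_dep)
  then show ?thesis using a unfolding sub_def by blast
qed

lemma children_iff: "c \<in> children V E r w \<longleftrightarrow> c \<in> V \<and> c \<noteq> r \<and> pa c = w"
  by (simp add: children_def)

lemma child_sub: "c \<in> children V E r w \<Longrightarrow> c \<in> sub w"
proof -
  assume "c \<in> children V E r w"
  then have "c \<in> V" "(pa ^^ 1) c = w" by (simp_all add: children_iff)
  then show ?thesis unfolding sub_def by blast
qed

lemma child_dep: "c \<in> children V E r w \<Longrightarrow> dep c = Suc (dep w)"
  unfolding children_iff using dep_par by blast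

lemma sub_dep: "y \<in> sub x \<Longrightarrow> dep x \<le> dep y"
  unfolding sub_def using dep_parn by auto

lemma notin_child: "c \<in> children V E r w \<Longrightarrow> w \<notin> sub c"
  using sub_dep child_dep by fastforce

lemma child_disj: assumes "c1 \<in> children V E r w" "c2 \<in> children V E r w" "c1 \<noteq> c2"
  shows "sub c1 \<inter> sub c2 = {}"
proof (rule ccontr)
  assume "sub c1 \<inter> sub c2 \<noteq> {}"
  then obtain y where "y \<in> sub c1" "y \<in> sub c2" by blast
  then obtain i j where y: "y \<in> V" "(pa ^^ i) y = c1" "(pa ^^ j) y = c2" unfolding sub_def by blast
  have "c1 \<noteq> r" "c2 \<noteq> r" using assms children_iff by auto
  then have "i < dep y" "j < dep y" using parn_ne_r[OF y(1)] y by auto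
  moreover have "dep c1 = dep c2" using child_dep assms by simp
  ultimately have "i = j" using dep_parn y by fastforce
  then show False using y assms(3) by simp
qed

lemma sub_decomp: assumes "z \<in> V" shows "sub z = insert z (\<Union>c\<in>children V E r z. sub c)"
proof (intro set_eqI iffI)
  fix y assume "y \<in> sub z"
  then obtain j where y: "y \<in> V" "(pa ^^ j) y = z" unfolding sub_def by blast
  show "y \<in> insert z (\<Union>c\<in>children V E r z. sub c)"
  proof (cases "y = z")
    case False
    define m where "m = (LEAST j. (pa ^^ j) y = z)"
    have m: "(pa ^^ m) y = z" unfolding m_def by (rule LeastI[of _ j]) (rule y(2))
    have "m \<noteq> 0" using m False by (cases m) simp_all
    then obtain i where i: "m = Suc i" by (cases m) auto
    have ne: "(pa ^^ i) y \<noteq> z" using not_less_Least[of i "\<lambda>j. (pa^^j) y = z"] i m_def by simp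
    define c where "c = (pa ^^ i) y"
    have pc: "pa c = z" using m i by (simp add: c_def)
    have "c \<noteq> r" using pc ne c_def by auto
    then have "c \<in> children V E r z" using pc parnV y(1) by (simp add: children_iff c_def)
    moreover have "y \<in> sub c" using y c_def by (auto simp: sub_def)
    ultimately show ?thesis by blast
  qed simp
next
  fix y assume "y \<in> insert z (\<Union>c\<in>children V E r z. sub c)"
  then show "y \<in> sub z" using sub_self[OF assms] sub_trans child_sub by blast
qed

lemma adj: assumes "E y z" shows "pa z = y \<or> pa y = z"
proof -
  have yV: "y \<in> V" and zV: "z \<in> V" using EV assms by auto
  show ?thesis
  proof (cases "z \<in> set (tp y r)")
    case True
    have "y \<noteq> r"
    proof
      assume "y = r" then show False using True tp_refl Eirr assms by auto
    qed
    note P = parent[OF yV this]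
    have "z \<noteq> y" using assms Eirr by auto
    then have zin: "z \<in> set (tp (pa y) r)" using True P by simp
    have pth: "is_path E y r (tp y r)" using tp_path yV rV by blast
    have hdp: "hd (tp (pa y) r) = pa y" using tp_path[OF _ rV, of "pa y"] P by (simp add: is_path_def)
    show ?thesis
    proof (rule ccontr)
      assume "\<not> ?thesis"
      then have "z \<noteq> hd (tp (pa y) r)" using hdp by auto
      then show False using no_chord2[of y "tp (pa y) r" z] pth P zin assms by (auto simp: is_path_def)
    qed
  next
    case False
    have pth: "is_path E y r (tp y r)" using tp_path yV rV by blast
    have ne: "tp y r \<noteq> []" using tp_ne yV rV by blast
    have "is_path E z r (z # tp y r)"
      using pth ne False assms Esym by (auto simp: is_path_def walk_Cons)
    then have tz: "tp z r = z # tp y r" using tp_eq by blast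
    have "r \<in> set (tp y r)" using pth ne last_in_set by (fastforce simp: is_path_def)
    then have "z \<noteq> r" using False by auto
    then have "tp (pa z) r = tp y r" using parent[OF zV] tz by simp
    then have "hd (tp (pa z) r) = y" using pth by (simp add: is_path_def)
    moreover have "hd (tp (pa z) r) = pa z" using tp_path[OF _ rV, of "pa z"] parV[OF zV] by (simp add: is_path_def)
    ultimately show ?thesis by simp
  qed
qed

lemma leaf_exists: assumes "X \<in> V" "X \<noteq> r" shows "\<exists>l\<in>sub X. is_leaf V E l"
proof -
  have fin: "finite (sub X)" using finV sub_V finite_subset by blast
  have ne: "sub X \<noteq> {}" using sub_self assms by blast
  obtain l where l: "l \<in> sub X" "dep l = Max (dep ` sub X)"
  proof -
    have "Max (dep ` sub X) \<in> dep ` sub X" using Max_in fin ne by blast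
    then show ?thesis using that by (metis imageE)
  qed
  have lmax: "dep y \<le> dep l" if "y \<in> sub X" for y
  proof -
    have "dep y \<le> Max (dep ` sub X)" using fin that by (intro Max_ge) auto
    then show ?thesis using l(2) by simp
  qed
  have lV: "l \<in> V" using l sub_V by blast
  have "dep X \<noteq> 0" using assms dep0 by blast
  then have "l \<noteq> r" using sub_dep[OF l(1)] dep_r by auto
  note P = parent[OF lV this]
  have "{v \<in> V. E l v} = {pa l}"
  proof (intro set_eqI iffI)
    fix v assume v: "v \<in> {v \<in> V. E l v}"
    show "v \<in> {pa l}"
    proof (rule ccontr)
      assume "v \<notin> {pa l}"
      then have pv: "pa v = l" using adj v by auto
      then have "v \<noteq> r" using \<open>l \<noteq> r\<close> by auto
      then have "dep v = Suc (dep l)" using dep_par v pv by auto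
      moreover have "v \<in> children V E r l" using pv v \<open>v \<noteq> r\<close> by (simp add: children_iff)
      then have "v \<in> sub X" using child_sub sub_trans l(1) by blast
      ultimately show False using lmax by fastforce
    qed
  next
    fix v assume "v \<in> {pa l}"
    then show "v \<in> {v \<in> V. E l v}" using P by simp
  qed
  then have "card {v \<in> V. E l v} = 1" by simp
  then show ?thesis using l(1) unfolding is_leaf_def by blast
qed

end



context tr begin

lemma dfs_main:
  "dfs_seq V E r z ys \<Longrightarrow> z \<in> V \<Longrightarrow> set ys = sub z \<and>
    (\<forall>w c1 c2. w \<in> sub z \<longrightarrow> c1 \<in> children V E r w \<longrightarrow> c2 \<in> children V E r w \<longrightarrow> c1 \<noteq> c2 \<longrightarrow>
       sep (sub c1) (sub c2) ys \<or> sep (sub c2) (sub c1) ys)"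
proof (induction rule: dfs_seq.induct)
  case (1 cs u xss)
  define n where "n = length cs"
  have len: "length xss = n" using list_all2_lengthD[OF 1(3)] n_def by simp
  have Ch: "i < n \<Longrightarrow> cs ! i \<in> children V E r u" for i using nth_mem[of i cs] 1(2) n_def by auto
  have ChV: "i < n \<Longrightarrow> cs ! i \<in> V" for i using Ch children_iff by simp
  have IH: "i < n \<Longrightarrow> set (xss!i) = sub (cs!i) \<and>
    (\<forall>w c1 c2. w \<in> sub (cs!i) \<longrightarrow> c1 \<in> children V E r w \<longrightarrow> c2 \<in> children V E r w \<longrightarrow> c1 \<noteq> c2 \<longrightarrow>
       sep (sub c1) (sub c2) (xss!i) \<or> sep (sub c2) (sub c1) (xss!i))" for i
    using 1(3) ChV n_def by (auto simp: list_all2_conv_all_nth)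
  have S: "i < n \<Longrightarrow> set (xss!i) = sub (cs!i)" for i using IH by blast
  have D: "i < n \<Longrightarrow> j < n \<Longrightarrow> i \<noteq> j \<Longrightarrow> x \<in> set (xss!i) \<Longrightarrow> x \<notin> sub (cs!j)" for i j x
  proof -
    assume a: "i < n" "j < n" "i \<noteq> j" "x \<in> set (xss!i)"
    have "cs!i \<noteq> cs!j" using a 1(1) n_def nth_eq_iff_index_eq[of cs i j] by simp
    then have "sub (cs!i) \<inter> sub (cs!j) = {}" using child_disj Ch a by blast
    then show ?thesis using S a by auto
  qed
  have U: "j < n \<Longrightarrow> u \<notin> sub (cs!j)" for j using notin_child Ch by blast
  have T: "x \<in> set (concat (take j xss)) \<Longrightarrow> \<exists>m<j. m < n \<and> x \<in> set (xss!m)" for x j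
  proof -
    assume "x \<in> set (concat (take j xss))"
    then obtain l where l: "l \<in> set (take j xss)" "x \<in> set l" by auto
    then obtain m where "m < length (take j xss)" "take j xss ! m = l" by (auto simp: in_set_conv_nth)
    then show ?thesis using l len by auto
  qed
  have Dr: "x \<in> set (concat (drop j xss)) \<Longrightarrow> \<exists>m\<ge>j. m < n \<and> x \<in> set (xss!m)" for x j
  proof -
    assume "x \<in> set (concat (drop j xss))"
    then obtain l where l: "l \<in> set (drop j xss)" "x \<in> set l" by auto
    then obtain m where "m < length (drop j xss)" "drop j xss ! m = l" by (auto simp: in_set_conv_nth)
    then show ?thesis using l len by (intro exI[of _ "j + m"]) auto
  qed
  have PRE: "m < n \<Longrightarrow> set (u # concat (take m xss)) \<inter> sub (cs!m) = {}" for m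
  proof -
    assume m: "m < n"
    { fix x assume x: "x \<in> set (u # concat (take m xss))" "x \<in> sub (cs!m)"
      have False
      proof (cases "x = u")
        case True then show False using U m x by simp
      next
        case False
        then obtain m' where "m' < m" "m' < n" "x \<in> set (xss!m')" using T x by auto
        then show False using D[of m' m x] m x by simp
      qed }
    then show ?thesis by blast
  qed
  have POST: "i < n \<Longrightarrow> i < j \<Longrightarrow> set (concat (drop j xss)) \<inter> sub (cs!i) = {}" for i j
  proof -
    assume m: "i < n" "i < j"
    { fix x assume x: "x \<in> set (concat (drop j xss))" "x \<in> sub (cs!i)"
      then obtain m' where "m' \<ge> j" "m' < n" "x \<in> set (xss!m')" using Dr by blast
      then have False using D[of m' i x] m x by simp }
    then show ?thesis by blast
  qed
  have split1: "u # concat xss = (u # concat (take j xss)) @ concat (drop j xss)" for j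
    using append_take_drop_id[of j xss] concat_append[of "take j xss" "drop j xss"] by simp
  have split2: "m < n \<Longrightarrow> u # concat xss = (u # concat (take m xss)) @ xss!m @ concat (drop (Suc m) xss)" for m
  proof -
    assume "m < n"
    then have "xss = take m xss @ xss!m # drop (Suc m) xss" using id_take_nth_drop[of m xss] len by simp
    then have "concat xss = concat (take m xss) @ xss!m @ concat (drop (Suc m) xss)"
      by (metis concat.simps(2) concat_append)
    then show ?thesis by simp
  qed
  have top: "i < j \<Longrightarrow> j < n \<Longrightarrow> sep (sub (cs!i)) (sub (cs!j)) (u # concat xss)" for i j
  proof -
    assume a: "i < j" "j < n"
    have "set (u # concat (take j xss)) \<inter> sub (cs!j) = {}" using PRE a by simp
    moreover have "set (concat (drop j xss)) \<inter> sub (cs!i) = {}" using POST a by simp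
    ultimately show ?thesis unfolding sep_def using split1[of j]
      by (intro exI[of _ "u # concat (take j xss)"] exI[of _ "concat (drop j xss)"] conjI)
  qed
  have setu: "set (u # concat xss) = sub u"
  proof (intro set_eqI iffI)
    fix x assume xin: "x \<in> set (u # concat xss)"
    show "x \<in> sub u"
    proof (cases "x = u")
      case True then show ?thesis using sub_self 1(4) by simp
    next
      case False
      then have "x \<in> set (concat xss)" using xin by simp
      then obtain m where "m < n" "x \<in> set (xss!m)" using T[of x n] len by auto
      then show ?thesis using S Ch child_sub sub_trans by blast
    qed
  next
    fix x assume "x \<in> sub u"
    then have "x = u \<or> (\<exists>c\<in>children V E r u. x \<in> sub c)" using sub_decomp 1(4) by auto
    then show "x \<in> set (u # concat xss)"
    proof
      assume "\<exists>c\<in>children V E r u. x \<in> sub c"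
      then obtain c where "c \<in> set cs" "x \<in> sub c" using 1(2) by auto
      then obtain m where "m < n" "cs!m = c" by (auto simp: in_set_conv_nth n_def)
      then have "x \<in> set (xss!m)" "xss!m \<in> set xss" using S \<open>x \<in> sub c\<close> len by auto
      then show ?thesis by auto
    qed simp
  qed
  have sepu: "sep (sub c1) (sub c2) (u # concat xss) \<or> sep (sub c2) (sub c1) (u # concat xss)"
    if w: "w \<in> sub u" "c1 \<in> children V E r w" "c2 \<in> children V E r w" "c1 \<noteq> c2" for w c1 c2
  proof (cases "w = u")
    case True
    have "c1 \<in> set cs" "c2 \<in> set cs" using w(2,3) True 1(2) by simp_all
    then obtain i j where i: "i < n" "cs!i = c1" and j: "j < n" "cs!j = c2"
      unfolding in_set_conv_nth n_def by blast
    have "i \<noteq> j" using i j w(4) by auto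
    then show ?thesis using top i j by (cases "i < j") (auto simp: not_less_iff_gr_or_eq)
  next
    case False
    then obtain c where "c \<in> children V E r u" "w \<in> sub c" using sub_decomp 1(4) w(1) by auto
    then have "c \<in> set cs" "w \<in> sub c" using 1(2) by simp_all
    then obtain m where m: "m < n" "cs!m = c" "w \<in> sub (cs!m)" unfolding in_set_conv_nth n_def by blast
    have sub1: "sub c1 \<subseteq> sub (cs!m)" using w(2) m(3) child_sub sub_trans by blast
    have sub2: "sub c2 \<subseteq> sub (cs!m)" using w(3) m(3) child_sub sub_trans by blast
    have P: "set (u # concat (take m xss)) \<inter> (sub c1 \<union> sub c2) = {}"
      using PRE[OF m(1)] sub1 sub2 by auto
    have Q: "set (concat (drop (Suc m) xss)) \<inter> (sub c1 \<union> sub c2) = {}"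
      using POST[OF m(1), of "Suc m"] sub1 sub2 by auto
    have Q': "set (concat (drop (Suc m) xss)) \<inter> (sub c2 \<union> sub c1) = {}"
      using Q by auto
    have P': "set (u # concat (take m xss)) \<inter> (sub c2 \<union> sub c1) = {}"
      using P by auto
    have "sep (sub c1) (sub c2) (xss!m) \<or> sep (sub c2) (sub c1) (xss!m)"
      using IH[OF m(1)] m(3) w(2-4) by blast
    then show ?thesis
    proof
      assume "sep (sub c1) (sub c2) (xss!m)"
      then show ?thesis using sep_ext[OF _ P Q] split2[OF m(1)] by simp
    next
      assume "sep (sub c2) (sub c1) (xss!m)"
      then show ?thesis using sep_ext[OF _ P' Q'] split2[OF m(1)] by simp
    qed
  qed
  show ?case using setu sepu by blast
qed

end



context tr begin

lemma LL_V: assumes "dfs_seq V E r r xs" shows "set xs = V"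
  using dfs_main[OF assms rV] sub_V sub_r by blast

lemma Lset_eq: assumes "dfs_seq V E r r xs" "y \<in> V"
  shows "Lset V E r xs y = {i. i < length (leaf_list V E xs) \<and> leaf_list V E xs ! i \<in> sub y}"
proof -
  have "i < length (leaf_list V E xs) \<Longrightarrow> leaf_list V E xs ! i \<in> V" for i
    using nth_mem[of i "leaf_list V E xs"] LL_V[OF assms(1)] by (auto simp: leaf_list_def)
  then show ?thesis unfolding Lset_def sub_def using anc_iff by auto
qed

lemma Lset_ne: assumes "dfs_seq V E r r xs" "y \<in> V" "y \<noteq> r"
  shows "Lset V E r xs y \<noteq> {}" "finite (Lset V E r xs y)"
proof -
  obtain l where l: "l \<in> sub y" "is_leaf V E l" using leaf_exists assms(2,3) by blast
  have "l \<in> V" using l sub_V by blast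
  then have "l \<in> set (leaf_list V E xs)" using l LL_V[OF assms(1)] by (simp add: leaf_list_def)
  then obtain i where "i < length (leaf_list V E xs)" "leaf_list V E xs ! i = l"
    unfolding in_set_conv_nth by blast
  then show "Lset V E r xs y \<noteq> {}" using Lset_eq[OF assms(1,2)] l by auto
  show "finite (Lset V E r xs y)" unfolding Lset_def by simp
qed

lemma half:
  assumes dfs: "dfs_seq V E r r xs" and xV: "x \<in> V" and yV: "y \<in> V"
    and a1: "1 \<le> \<alpha>" and b1: "1 \<le> \<beta>" and ab: "k + 1 \<le> \<alpha> + \<beta>" and k: "1 \<le> k"
    and cxr: "(pa ^^ (\<alpha> - 1)) x \<noteq> r" and cyr: "(pa ^^ (\<beta> - 1)) y \<noteq> r"
    and sp: "sep (sub ((pa ^^ (\<alpha> - 1)) x)) (sub ((pa ^^ (\<beta> - 1)) y)) xs"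
  shows "\<exists>i<k. fi V E r xs k i x \<inter> fi V E r xs k i y = {}"
proof -
  define i where "i = (if \<alpha> \<ge> k then 0 else k - \<alpha>)"
  have i1: "k - 1 - i < \<alpha>" and i2: "i < \<beta>" and i3: "i < k" using ab a1 b1 k by (auto simp: i_def)
  define X where "X = (pa ^^ (k - 1 - i)) x"
  define Y where "Y = (pa ^^ i) y"
  have XV: "X \<in> V" "Y \<in> V" using parnV xV yV X_def Y_def by auto
  have eX: "(pa ^^ (\<alpha> - 1 - (k - 1 - i))) X = (pa ^^ (\<alpha> - 1)) x"
  proof -
    have "(pa ^^ (\<alpha> - 1 - (k - 1 - i))) X = (pa ^^ ((\<alpha> - 1 - (k - 1 - i)) + (k - 1 - i))) x"
      unfolding X_def by (simp add: funpow_add)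
    moreover have "(\<alpha> - 1 - (k - 1 - i)) + (k - 1 - i) = \<alpha> - 1" using i1 by simp
    ultimately show ?thesis by simp
  qed
  have eY: "(pa ^^ (\<beta> - 1 - i)) Y = (pa ^^ (\<beta> - 1)) y"
  proof -
    have "(pa ^^ (\<beta> - 1 - i)) Y = (pa ^^ ((\<beta> - 1 - i) + i)) y"
      unfolding Y_def by (simp add: funpow_add)
    moreover have "(\<beta> - 1 - i) + i = \<beta> - 1" using i2 by simp
    ultimately show ?thesis by simp
  qed
  have Xr: "X \<noteq> r" using eX cxr by auto
  have Yr: "Y \<noteq> r" using eY cyr by auto
  have XS: "sub X \<subseteq> sub ((pa ^^ (\<alpha> - 1)) x)"
  proof -
    have "X \<in> sub ((pa ^^ (\<alpha> - 1)) x)" using eX XV unfolding sub_def by blast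
    then show ?thesis using sub_trans by blast
  qed
  have YS: "sub Y \<subseteq> sub ((pa ^^ (\<beta> - 1)) y)"
  proof -
    have "Y \<in> sub ((pa ^^ (\<beta> - 1)) y)" using eY XV unfolding sub_def by blast
    then show ?thesis using sub_trans by blast
  qed
  define LL where "LL = leaf_list V E xs"
  have spL: "sep (sub ((pa ^^ (\<alpha> - 1)) x)) (sub ((pa ^^ (\<beta> - 1)) y)) LL"
    unfolding LL_def leaf_list_def by (rule sep_filter[OF sp])
  define tX where "tX = tidx V E r xs X"
  define sY where "sY = sidx V E r xs Y"
  have tXin: "tX \<in> Lset V E r xs X" unfolding tX_def tidx_def
    using Lset_ne[OF dfs XV(1) Xr] by (rule_tac Max_in) auto
  have sYin: "sY \<in> Lset V E r xs Y" unfolding sY_def sidx_def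
    using Lset_ne[OF dfs XV(2) Yr] by (rule_tac Min_in) auto
  have t1: "tX < length LL" "LL ! tX \<in> sub ((pa ^^ (\<alpha> - 1)) x)"
    using tXin Lset_eq[OF dfs XV(1)] XS LL_def by auto
  have s1: "sY < length LL" "LL ! sY \<in> sub ((pa ^^ (\<beta> - 1)) y)"
    using sYin Lset_eq[OF dfs XV(2)] YS LL_def by auto
  have lt: "tX < sY" using sep_idx[OF spL t1(1) s1(1) t1(2) s1(2)] .
  have "fi V E r xs k i x \<inter> fi V E r xs k i y = {}"
    unfolding fi_def using lt by (auto simp: X_def Y_def tX_def sY_def)
  then show ?thesis using i3 by blast
qed

lemma walk_up: "x \<in> V \<Longrightarrow> n \<le> dep x \<Longrightarrow>
  \<exists>ws. is_walk E ws \<and> hd ws = x \<and> last ws = (pa ^^ n) x \<and> length ws = Suc n"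
proof (induction n)
  case 0 then show ?case by (intro exI[of _ "[x]"]) simp
next
  case (Suc n)
  then obtain ws where ws: "is_walk E ws" "hd ws = x" "last ws = (pa ^^ n) x" "length ws = Suc n" by auto
  have "(pa ^^ n) x \<noteq> r"
  proof
    assume "(pa ^^ n) x = r"
    then have "dep ((pa ^^ n) x) = 0" by simp
    then show False using dep_parn[OF Suc.prems(1)] Suc.prems(2) by simp
  qed
  then have E1: "E ((pa ^^ n) x) (pa ((pa ^^ n) x))" using parent parnV Suc.prems(1) by blast
  have ne: "ws \<noteq> []" using ws(4) by auto
  have "is_walk E (ws @ [pa ((pa ^^ n) x)])" using walk_append[of ws "[pa ((pa ^^ n) x)]" E] ws ne E1 by simp
  moreover have "hd (ws @ [pa ((pa ^^ n) x)]) = x" using ws ne by simp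
  ultimately show ?case using ws by (intro exI[of _ "ws @ [pa ((pa ^^ n) x)]"]) simp
qed

end



theorem lemma9:
  fixes V :: "'a set" and E :: "'a \<Rightarrow> 'a \<Rightarrow> bool" and r :: 'a and k :: nat
    and xs :: "'a list" and u v :: 'a
  assumes "is_tree V E"
    and "r \<in> V" and "\<not> is_leaf V E r"
    and "k \<ge> 1"
    and "dfs_seq V E r r xs"
    and "u \<in> V" and "v \<in> V" and "u \<noteq> v"
    and "\<not> tdist E u v \<le> k"
  shows "fprime E r k u \<inter> fprime E r k v = {}
         \<or> (\<exists>i<k. fi V E r xs k i u \<inter> fi V E r xs k i v = {})"
proof -
  interpret tr V E r using assms(1,2) by unfold_locales
  note uV = assms(6) and vV = assms(7) and dfs = assms(5) and k = assms(4)
  show ?thesis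
  proof (rule ccontr)
    assume nc: "\<not> ?thesis"
    then have F: "fprime E r k u \<inter> fprime E r k v \<noteq> {}"
      and G: "\<forall>i<k. fi V E r xs k i u \<inter> fi V E r xs k i v \<noteq> {}" by auto
    from F obtain z where "z \<in> fprime E r k u" "z \<in> fprime E r k v" by blast
    then have du1: "dep u \<le> dep v + k" and du2: "dep v \<le> dep u + k" by (auto simp: fprime_def)
    define P where "P i \<longleftrightarrow> (\<exists>j. (pa ^^ i) u = (pa ^^ j) v)" for i
    have Pd: "P (dep u)" unfolding P_def using parn_dep uV vV by metis
    define a where "a = (LEAST i. P i)"
    have Pa: "P a" unfolding a_def using Pd by (rule LeastI)
    have ale: "a \<le> dep u" unfolding a_def using Pd by (rule Least_le)
    obtain b0 where wb: "(pa ^^ a) u = (pa ^^ b0) v" using Pa P_def by blast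
    define w where "w = (pa ^^ a) u"
    have wV: "w \<in> V" using parnV uV w_def by simp
    have dw: "dep w = dep u - a" using dep_parn uV w_def by simp
    have dwv: "dep w = dep v - b0" using dep_parn vV wb w_def by simp
    define b where "b = dep v - dep w"
    have ble: "b \<le> dep v" using b_def by simp
    have wb2: "(pa ^^ b) v = w"
    proof (cases "b0 \<le> dep v")
      case True then have "b = b0" using b_def dwv by simp
      then show ?thesis using wb w_def by simp
    next
      case False
      then have "w = r" using parn_big[OF vV] wb w_def by simp
      then have "b = dep v" using b_def by simp
      then show ?thesis using parn_dep[OF vV] \<open>w = r\<close> by simp
    qed
    have dwv2: "dep w = dep v - b" using dep_parn[OF vV, of b] wb2 by simp
    obtain ws1 where ws1: "is_walk E ws1" "hd ws1 = u" "last ws1 = w" "length ws1 = Suc a"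
      using walk_up[OF uV ale] w_def by blast
    obtain ws2 where ws2: "is_walk E ws2" "hd ws2 = v" "last ws2 = w" "length ws2 = Suc b"
      using walk_up[OF vV ble] wb2 by blast
    have "tdist E u v \<le> a + b"
    proof (cases "b = 0")
      case True
      then have "ws2 = [v]" using ws2 by (cases ws2) auto
      then have "w = v" using ws2 by simp
      moreover have "tdist E u w \<le> a" using tdist_le[OF ws1] .
      ultimately show ?thesis using True by simp
    next
      case False
      obtain t where rt: "rev ws2 = w # t"
        using ws2 by (cases "rev ws2") (auto simp: hd_rev[symmetric])
      have tne: "t \<noteq> []" using rt ws2(4) False
        by (metis length_Cons length_rev list.size(3) Suc_inject)
      have wr: "is_walk E (w # t)" using walk_rev[OF Esym', of ws2] ws2(1) rt by simp
      have n1: "ws1 \<noteq> []" using ws1(4) by auto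
      have wt: "is_walk E (ws1 @ t)" using walk_append[OF n1 tne] ws1 wr tne by (simp add: walk_Cons)
      have "last t = v" using rt ws2(2) tne
        by (metis last_ConsR last_rev ws2(4) length_greater_0_conv zero_less_Suc hd_rev[symmetric]
             list.size(3) Nil_is_rev_conv)
      moreover have "length (ws1 @ t) = Suc (a + b)" using rt ws1(4) ws2(4)
        by (metis length_Cons length_rev length_append add_Suc Suc_inject)
      ultimately show ?thesis using tdist_le[OF wt] ws1 n1 tne by simp
    qed
    then have ab: "k + 1 \<le> a + b" using assms(9) by simp
    have a1: "1 \<le> a"
    proof (rule ccontr)
      assume "\<not> 1 \<le> a"
      then have "a = 0" by simp
      then show False using ab b_def dw du2 by simp
    qed
    have b1: "1 \<le> b"
    proof (rule ccontr)
      assume "\<not> 1 \<le> b"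
      then have "b = 0" by simp
      then show False using ab dw dwv2 du1 ale by simp
    qed
    define cx where "cx = (pa ^^ (a - 1)) u"
    define cy where "cy = (pa ^^ (b - 1)) v"
    have pcx: "pa cx = w" unfolding cx_def w_def using a1 by (cases a) auto
    have pcy: "pa cy = w" unfolding cy_def using a1 b1 wb2 by (cases b) auto
    have dcx: "dep cx = Suc (dep w)" using dep_parn[OF uV, of "a - 1"] cx_def dw a1 ale by simp
    have dcy: "dep cy = Suc (dep w)" using dep_parn[OF vV, of "b - 1"] cy_def dwv2 b1 ble by simp
    have cxr: "cx \<noteq> r" using dcx by auto
    have cyr: "cy \<noteq> r" using dcy by auto
    have cne: "cx \<noteq> cy"
    proof
      assume "cx = cy"
      then have "P (a - 1)" unfolding P_def cx_def cy_def by blast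
      moreover have "a - 1 < a" using a1 by simp
      ultimately show False using not_less_Least[of "a - 1" P] a_def by simp
    qed
    have cxc: "cx \<in> children V E r w" using cxr pcx parnV[OF uV] cx_def by (simp add: children_iff)
    have cyc: "cy \<in> children V E r w" using cyr pcy parnV[OF vV] cy_def by (simp add: children_iff)
    have "w \<in> sub r" using sub_r wV by simp
    then have "sep (sub cx) (sub cy) xs \<or> sep (sub cy) (sub cx) xs"
      using dfs_main[OF dfs rV] cxc cyc cne by blast
    then show False
    proof
      assume "sep (sub cx) (sub cy) xs"
      then have "\<exists>i<k. fi V E r xs k i u \<inter> fi V E r xs k i v = {}"
        using half[OF dfs uV vV a1 b1 ab k] cxr cyr cx_def cy_def by simp
      then show False using G by blast
    next
      assume "sep (sub cy) (sub cx) xs"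
      moreover have "k + 1 \<le> b + a" using ab by simp
      ultimately have "\<exists>i<k. fi V E r xs k i v \<inter> fi V E r xs k i u = {}"
        using half[OF dfs vV uV b1 a1 _ k] cxr cyr cx_def cy_def by simp
      then show False using G by (auto simp: Int_commute)
    qed
  qed
qed



end
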